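(* Let $c_1,\dots,c_7$ be real numbers and let $\mathcal{C}$ be the $6\times 6$ matrix \[ \mathcal{C}=\begin{pmatrix} 0 & c_5 & 0 & c_1 & 0 & 0 \\ c_4 & 0 & c_7 & 0 & c_2 & 0 \\ 0 & c_6 & 0 & 0 & 0 & c_3 \\ c_1 & 0 & 0 & 0 & c_5 & 0 \\ 0 & c_2 & 0 & c_4 & 0 & c_7 \\ 0 & 0 & c_3 & 0 & c_6 & 0 \end{pmatrix}. \] Then $\det\mathcal{C} = -\left(c_1c_2c_3 - c_1c_6c_7 - c_3c_4c_5\right)^2$. Consequently, $\mathcal{C}$ is non-singular (equivalently, for every vector $(I^1,\dots,I^6)^\top\in\mathbb{R}^6$ the linear system $(I^1,\dots,I^6)^\top=\mathcal{C}\,(dI_1,\dots,dI_6)^\top$ has a unique solution $(dI_1,\dots,dI_6)^\top$) if and only if $c_1c_2c_3 - c_1c_6c_7 - c_3c_4c_5 \neq 0$.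
   Context: In the paper, $c_1,c_2,c_3$ are contralateral and $c_4,\dots,c_7$ are ipsilateral coupling strengths in a network of six coupled oscillators (one per insect leg); the matrix $\mathcal{C}$ encodes how an external input added to each unit can be redistributed as perturbations $dI_j$ of the coupling terms. *)

theory Defs
  imports "Jordan_Normal_Form.Matrix" "Jordan_Normal_Form.Determinant"
begin

definition coupling_matrix ::
  "real \<Rightarrow> real \<Rightarrow> real \<Rightarrow> real \<Rightarrow> real \<Rightarrow> real \<Rightarrow> real \<Rightarrow> real mat" where
  "coupling_matrix c1 c2 c3 c4 c5 c6 c7 = mat_of_rows_list 6
     [[0,  c5, 0,  c1, 0,  0 ],
      [c4, 0,  c7, 0,  c2, 0 ],
      [0,  c6, 0,  0,  0,  c3],
      [c1, 0,  0,  0,  c5, 0 ],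
      [0,  c2, 0,  c4, 0,  c7],
      [0,  0,  c3, 0,  c6, 0 ]]"

end

theory Submission
  imports Defs
begin

lemma det_expand0:
  fixes f :: "nat \<times> nat \<Rightarrow> 'a :: comm_ring_1"
  shows "det (mat (Suc n) (Suc n) f) = (\<Sum>j<Suc n. f (0,j) * ((-1)^j * det (mat n n (\<lambda>(i,k). f (Suc i, insert_index j k)))))"
proof -
  have "det (mat (Suc n) (Suc n) f) = (\<Sum>j<Suc n. (mat (Suc n) (Suc n) f) $$ (0,j) * cofactor (mat (Suc n) (Suc n) f) 0 j)"
    by (rule laplace_expansion_row) auto
  also have "\<dots> = (\<Sum>j<Suc n. f (0,j) * ((-1)^j * det (mat n n (\<lambda>(i,k). f (Suc i, insert_index j k)))))"
  proof (rule sum.cong[OF refl])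
    fix j assume j: "j \<in> {..<Suc n}"
    have "mat_delete (mat (Suc n) (Suc n) f) 0 j = mat n n (\<lambda>(i,k). f (Suc i, insert_index j k))"
      by (rule eq_matI) (auto simp: mat_delete_def insert_index_def j)
    then show "(mat (Suc n) (Suc n) f) $$ (0,j) * cofactor (mat (Suc n) (Suc n) f) 0 j = f (0,j) * ((-1)^j * det (mat n n (\<lambda>(i,k). f (Suc i, insert_index j k))))"
      using j by (simp add: cofactor_def)
  qed
  finally show ?thesis .
qed

definition zm :: "real \<Rightarrow> real \<Rightarrow> real" where "zm a b = a * b"
lemma zm_cong[cong]: "a = a' \<Longrightarrow> zm a b = zm a' b" by simp
lemma zm0[simp]: "zm 0 b = 0" by (simp add: zm_def)

lemma det_expand_zm:
  fixes f :: "nat \<times> nat \<Rightarrow> real"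
  assumes "0 < n"
  shows "det (mat n n f) = (\<Sum>j<n. zm (f (0,j)) ((-1)^j * det (mat (n-1) (n-1) (\<lambda>(i,k). f (Suc i, insert_index j k)))))"
  using det_expand0[of "n-1" f] assms by (simp add: zm_def)

lemma cm_mat: "coupling_matrix c1 c2 c3 c4 c5 c6 c7 = mat 6 6 (\<lambda>(i,j). [[0,  c5, 0,  c1, 0,  0 ],
      [c4, 0,  c7, 0,  c2, 0 ],
      [0,  c6, 0,  0,  0,  c3],
      [c1, 0,  0,  0,  c5, 0 ],
      [0,  c2, 0,  c4, 0,  c7],
      [0,  0,  c3, 0,  c6, 0 ]] ! i ! j)"
  unfolding coupling_matrix_def by (rule eq_matI) (auto simp: mat_of_rows_list_def)

lemma cm_det: "det (coupling_matrix c1 c2 c3 c4 c5 c6 c7) = - ((c1*c2*c3 - c1*c6*c7 - c3*c4*c5)^2)"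
  unfolding cm_mat
  apply (simp add: det_expand_zm lessThan_nat_numeral insert_index_def)
  apply (simp only: zm_def)
  apply (simp add: det_expand_zm lessThan_nat_numeral insert_index_def)
  apply (simp only: zm_def)
  apply (simp add: det_expand_zm lessThan_nat_numeral insert_index_def)
  apply (simp only: zm_def)
  apply (simp add: det_expand_zm lessThan_nat_numeral insert_index_def)
  apply (simp only: zm_def)
  apply (simp add: det_expand_zm lessThan_nat_numeral insert_index_def)
  apply (simp only: zm_def)
  apply (simp add: det_expand_zm lessThan_nat_numeral insert_index_def)
  apply (simp only: zm_def)
  apply (simp add: algebra_simps power2_eq_square)
  done

lemma cm_carrier: "coupling_matrix c1 c2 c3 c4 c5 c6 c7 \<in> carrier_mat 6 6"
  unfolding cm_mat by simp

lemma inv_det: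
  fixes C :: "real mat"
  assumes C: "C \<in> carrier_mat n n"
  shows "invertible_mat C \<longleftrightarrow> det C \<noteq> 0"
proof
  assume "invertible_mat C"
  then obtain B where CB: "C * B = 1\<^sub>m n" and BC: "B * C = 1\<^sub>m (dim_row B)"
    using C unfolding invertible_mat_def inverts_mat_def by auto
  have "dim_col B = n" using CB by (metis index_mult_mat(3) index_one_mat(3))
  moreover have "dim_row B = n" using BC C by (metis index_mult_mat(3) index_one_mat(3) carrier_matD(2))
  ultimately have B: "B \<in> carrier_mat n n" by auto
  have "det C * det B = 1" using det_mult[OF C B] CB by simp
  then show "det C \<noteq> 0" by auto
next
  assume "det C \<noteq> 0"
  from det_non_zero_imp_unit[OF C this]
  have "C \<in> Units (ring_mat TYPE(real) n undefined)" .
  then obtain B where B: "B \<in> carrier_mat n n" and "B * C = 1\<^sub>m n" "C * B = 1\<^sub>m n"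
    unfolding Units_def ring_mat_def by auto
  then show "invertible_mat C" using C
    unfolding invertible_mat_def inverts_mat_def square_mat.simps by auto
qed

lemma solve_det:
  fixes C :: "real mat"
  assumes C: "C \<in> carrier_mat n n"
  shows "(\<forall>I \<in> carrier_vec n. \<exists>!dI. dI \<in> carrier_vec n \<and> I = C *\<^sub>v dI) \<longleftrightarrow> det C \<noteq> 0"
proof
  assume H: "\<forall>I \<in> carrier_vec n. \<exists>!dI. dI \<in> carrier_vec n \<and> I = C *\<^sub>v dI"
  show "det C \<noteq> 0"
  proof
    assume "det C = 0"
    then obtain v where v: "v \<in> carrier_vec n" "v \<noteq> 0\<^sub>v n" "C *\<^sub>v v = 0\<^sub>v n"
      using det_0_iff_vec_prod_zero[OF C] by auto
    have "0\<^sub>v n = C *\<^sub>v 0\<^sub>v n" using C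
      by (intro eq_vecI) (auto simp: mult_mat_vec_def)
    then show False using H v by (metis zero_carrier_vec)
  qed
next
  assume "det C \<noteq> 0"
  from det_non_zero_imp_unit[OF C this]
  have "C \<in> Units (ring_mat TYPE(real) n undefined)" .
  then obtain B where B: "B \<in> carrier_mat n n" and BC: "B * C = 1\<^sub>m n" and CB: "C * B = 1\<^sub>m n"
    unfolding Units_def ring_mat_def by auto
  show "\<forall>I \<in> carrier_vec n. \<exists>!dI. dI \<in> carrier_vec n \<and> I = C *\<^sub>v dI"
  proof
    fix I :: "real vec" assume I: "I \<in> carrier_vec n"
    show "\<exists>!dI. dI \<in> carrier_vec n \<and> I = C *\<^sub>v dI"
    proof
      show "B *\<^sub>v I \<in> carrier_vec n \<and> I = C *\<^sub>v (B *\<^sub>v I)"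
        using B C I CB by (metis assoc_mult_mat_vec mult_mat_vec_carrier one_mult_mat_vec)
    next
      fix d assume d: "d \<in> carrier_vec n \<and> I = C *\<^sub>v d"
      then have "B *\<^sub>v I = d" using B C BC by (metis assoc_mult_mat_vec one_mult_mat_vec)
      then show "d = B *\<^sub>v I" by simp
    qed
  qed
qed

theorem mainTheorem1:
  fixes c1 c2 c3 c4 c5 c6 c7 :: real
  defines "C \<equiv> coupling_matrix c1 c2 c3 c4 c5 c6 c7"
  shows "det C = - ((c1*c2*c3 - c1*c6*c7 - c3*c4*c5)^2)
    \<and> (invertible_mat C \<longleftrightarrow> c1*c2*c3 - c1*c6*c7 - c3*c4*c5 \<noteq> 0)
    \<and> ((\<forall>I \<in> carrier_vec 6. \<exists>!dI. dI \<in> carrier_vec 6 \<and> I = C *\<^sub>v dI)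
           \<longleftrightarrow> c1*c2*c3 - c1*c6*c7 - c3*c4*c5 \<noteq> 0)"
  using cm_det[of c1 c2 c3 c4 c5 c6 c7] inv_det[OF cm_carrier] solve_det[OF cm_carrier]
  unfolding C_def by auto

end
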